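(* Let $n,d \geq 1$. The morphism $\mathbb{P}^1\times\mathbb{P}^n \to \mathbb{P}^{2(n+1)}$ given by \[[x_0:x_1]\times[y_0:\ldots:y_n] \mapsto [x_0^dy_0 : x_0^dy_1 : \ldots : x_0^dy_{n-1} : x_0^dy_n : x_1^dy_n : dx_0x_1^{d-1}y_0 : x_1^dy_0 + dx_0x_1^{d-1}y_1 : x_1^dy_1 + dx_0x_1^{d-1}y_2 : \ldots : x_1^dy_{n-1} + dx_0x_1^{d-1}y_n]\] is injective. In particular, $\operatorname{injdim}(\mathbb{P}^1\times\mathbb{P}^n,\mathcal{O}(d,1)) \leq 2(n+1)$.
   Context: Over $\mathbb{C}$. For a line bundle $\mathscr{L}$ on a projective variety $X$ and a nonzero subspace $V \subseteq H^0(X,\mathscr{L})$, $\varphi_V \colon X \dashrightarrow \mathbb{P}(V^* )$ is the rational map given by the sections in $V$; $\operatorname{injdim}(X,\mathscr{L}) := \inf\{\dim V - 1 : \varphi_V \text{ is an injective morphism}\}$. *)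

theory Defs
  imports "HOL-Analysis.Analysis" "HOL-Library.Extended_Nat" "HOL-Library.Function_Algebras"
begin

(* Points of P^1: pairs (x0,x1) \<noteq> (0,0); points of P^n: y :: nat \<Rightarrow> complex,
   only the coordinates y 0, ..., y n matter. *)
definition nz1 :: "complex \<times> complex \<Rightarrow> bool" where
  "nz1 x \<longleftrightarrow> x \<noteq> (0, 0)"

definition nzn :: "nat \<Rightarrow> (nat \<Rightarrow> complex) \<Rightarrow> bool" where
  "nzn n y \<longleftrightarrow> (\<exists>j\<le>n. y j \<noteq> 0)"

definition same_pt1 :: "complex \<times> complex \<Rightarrow> complex \<times> complex \<Rightarrow> bool" where
  "same_pt1 x x' \<longleftrightarrow> (\<exists>a. a \<noteq> 0 \<and> fst x = a * fst x' \<and> snd x = a * snd x')"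

definition same_ptn :: "nat \<Rightarrow> (nat \<Rightarrow> complex) \<Rightarrow> (nat \<Rightarrow> complex) \<Rightarrow> bool" where
  "same_ptn n y y' \<longleftrightarrow> (\<exists>b. b \<noteq> 0 \<and> (\<forall>j\<le>n. y j = b * y' j))"

(* The explicit map P^1 x P^n \<rightarrow> P^(2(n+1)), coordinates indexed by 0..2n+2 *)
definition Fmap :: "nat \<Rightarrow> nat \<Rightarrow> complex \<times> complex \<Rightarrow> (nat \<Rightarrow> complex) \<Rightarrow> nat \<Rightarrow> complex" where
  "Fmap d n x y k =
     (let x0 = fst x; x1 = snd x in
      if k \<le> n then x0 ^ d * y k
      else if k = n + 1 then x1 ^ d * y n
      else if k = n + 2 then of_nat d * x0 * x1 ^ (d - 1) * y 0
      else x1 ^ d * y (k - (n + 3)) + of_nat d * x0 * x1 ^ (d - 1) * y (k - (n + 3) + 1))"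

(* Global sections of O(d,1) on P^1 x P^n: bihomogeneous forms of bidegree (d,1),
   given by coefficient arrays s (i,j) of the monomial x0^(d-i) x1^i y_j, i \<le> d, j \<le> n. *)
definition H0 :: "nat \<Rightarrow> nat \<Rightarrow> (nat \<times> nat \<Rightarrow> complex) set" where
  "H0 d n = {s. \<forall>i j. (i > d \<or> j > n) \<longrightarrow> s (i, j) = 0}"

definition ev_sec :: "nat \<Rightarrow> nat \<Rightarrow> (nat \<times> nat \<Rightarrow> complex) \<Rightarrow> complex \<times> complex \<Rightarrow> (nat \<Rightarrow> complex) \<Rightarrow> complex" where
  "ev_sec d n s x y = (\<Sum>i\<le>d. \<Sum>j\<le>n. s (i, j) * fst x ^ (d - i) * snd x ^ i * y j)"

definition cscale :: "complex \<Rightarrow> (nat \<times> nat \<Rightarrow> complex) \<Rightarrow> (nat \<times> nat \<Rightarrow> complex)" where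
  "cscale c s = (\<lambda>p. c * s p)"

(* \<phi>_V is an injective morphism: V has no base points, and the induced map
   P \<mapsto> (s \<mapsto> s(P)) into P(V^* ) is injective. *)
definition inj_morphism :: "nat \<Rightarrow> nat \<Rightarrow> (nat \<times> nat \<Rightarrow> complex) set \<Rightarrow> bool" where
  "inj_morphism d n V \<longleftrightarrow>
     (\<forall>x y. nz1 x \<and> nzn n y \<longrightarrow> (\<exists>s\<in>V. ev_sec d n s x y \<noteq> 0)) \<and>
     (\<forall>x y x' y'. nz1 x \<and> nzn n y \<and> nz1 x' \<and> nzn n y' \<longrightarrow>
        (\<exists>c. c \<noteq> 0 \<and> (\<forall>s\<in>V. ev_sec d n s x y = c * ev_sec d n s x' y')) \<longrightarrow>
        same_pt1 x x' \<and> same_ptn n y y')"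

definition injdim_P1Pn :: "nat \<Rightarrow> nat \<Rightarrow> enat" where
  "injdim_P1Pn d n =
     (INF V \<in> {V. V \<subseteq> H0 d n \<and> module.subspace cscale V \<and> V \<noteq> {\<lambda>_. 0} \<and> inj_morphism d n V}.
        enat (vector_space.dim cscale V - 1))"

end

theory Submission
  imports Defs
begin

interpretation cs: vector_space cscale
  by unfold_locales (auto simp: cscale_def fun_eq_iff algebra_simps)

definition dl :: "nat \<Rightarrow> nat \<Rightarrow> complex \<Rightarrow> (nat \<times> nat \<Rightarrow> complex)" where
  "dl a b c = (\<lambda>p. if p = (a, b) then c else 0)"

lemma ev_dl:
  assumes "a \<le> d" "b \<le> n"
  shows "ev_sec d n (dl a b c) x y = c * fst x ^ (d - a) * snd x ^ a * y b"
proof -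
  have h: "\<And>i j. dl a b c (i, j) * fst x ^ (d - i) * snd x ^ i * y j
     = (if i = a then (if j = b then c * fst x ^ (d - a) * snd x ^ a * y b else 0) else 0)"
    by (simp add: dl_def)
  have h2: "\<And>i. (\<Sum>j\<le>n. if i = a then (if j = b then c * fst x ^ (d - a) * snd x ^ a * y b else 0) else 0)
     = (if i = a then c * fst x ^ (d - a) * snd x ^ a * y b else 0)"
    using assms by (simp add: sum.delta)
  show ?thesis unfolding ev_sec_def h h2 using assms by (simp add: sum.delta)
qed

lemma ev_add: "ev_sec d n (s + t) x y = ev_sec d n s x y + ev_sec d n t x y"
  unfolding ev_sec_def by (simp add: sum.distrib algebra_simps)

lemma dl_H0: "a \<le> d \<Longrightarrow> b \<le> n \<Longrightarrow> dl a b c \<in> H0 d n"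
  unfolding H0_def dl_def by auto

lemma H0_sub: "cs.subspace (H0 d n)"
  unfolding cs.subspace_def H0_def cscale_def by auto

definition gen :: "nat \<Rightarrow> nat \<Rightarrow> nat \<Rightarrow> (nat \<times> nat \<Rightarrow> complex)" where
  "gen d n k = (if k \<le> n then dl 0 k 1 else if k = n + 1 then dl d n 1
     else if k = n + 2 then dl (d - 1) 0 (of_nat d)
     else dl d (k - (n + 3)) 1 + dl (d - 1) (k - (n + 3) + 1) (of_nat d))"

lemma gen_ev:
  assumes "d \<ge> 1" "k \<le> 2 * n + 2"
  shows "ev_sec d n (gen d n k) x y = Fmap d n x y k"
  using assms
  by (auto simp: gen_def Fmap_def Let_def ev_dl ev_add)

lemma gen_H0:
  assumes "k \<le> 2 * n + 2"
  shows "gen d n k \<in> H0 d n"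
  using assms H0_sub[of d n]
  by (auto simp: gen_def intro!: dl_H0 cs.subspace_add)

lemma tt_eq:
  fixes t t' :: complex
  assumes "t ^ d = t' ^ d" "t ^ (d - 1) = t' ^ (d - 1)" "d \<ge> 1"
  shows "t = t'"
proof -
  have e: "\<And>u::complex. u ^ d = u * u ^ (d - 1)" using assms(3)
    by (metis Suc_diff_1 less_le_trans zero_less_one power_Suc)
  show ?thesis
  proof (cases "t ^ (d - 1) = 0")
    case True
    have nz: "d - 1 \<noteq> 0" using True by (cases "d - 1 = 0") auto
    have "t' ^ (d - 1) = 0" using True assms(2) by metis
    then have "t = 0" "t' = 0" using nz True by auto
    then show ?thesis by simp
  next
    case False
    have "t * t ^ (d - 1) = t' * t ^ (d - 1)" using assms(1,2) e[of t] e[of t'] by metis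
    then show ?thesis using False by (metis mult_right_cancel)
  qed
qed

lemma nonvan:
  assumes "d \<ge> 1" "nz1 x" "nzn n y"
  shows "\<exists>k\<le>2 * n + 2. Fmap d n x y k \<noteq> 0"
proof -
  obtain a b where x: "x = (a, b)" by (cases x)
  obtain j where j: "j \<le> n" "y j \<noteq> 0" using assms(3) unfolding nzn_def by auto
  show ?thesis
  proof (cases "a = 0")
    case False
    then have "Fmap d n x y j \<noteq> 0" using j by (simp add: Fmap_def x)
    then show ?thesis using j by (intro exI[of _ j]) auto
  next
    case True
    then have b: "b \<noteq> 0" using assms(2) x by (simp add: nz1_def)
    show ?thesis
    proof (cases "j = n")
      case True
      then have "Fmap d n x y (n+1) \<noteq> 0" using j b by (simp add: Fmap_def x)
      then show ?thesis by (intro exI[of _ "n+1"]) auto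
    next
      case False
      then have "Fmap d n x y (n+3+j) \<noteq> 0" using j b \<open>a = 0\<close> by (simp add: Fmap_def x)
      then show ?thesis using j False by (intro exI[of _ "n+3+j"]) auto
    qed
  qed
qed

lemma injpart:
  assumes n1: "n \<ge> 1" and d1: "d \<ge> 1" and nx: "nz1 x" "nz1 x'" and ny: "nzn n y" "nzn n y'"
    and c0: "c \<noteq> 0" and F: "\<forall>k\<le>2 * n + 2. Fmap d n x y k = c * Fmap d n x' y' k"
  shows "same_pt1 x x' \<and> same_ptn n y y'"
proof -
  obtain a b where x: "x = (a, b)" by (cases x)
  obtain a' b' where x': "x' = (a', b')" by (cases x')
  have hA: "a ^ d * y k = c * (a' ^ d * y' k)" if "k \<le> n" for k
    using F[rule_format, of k] that by (auto simp: Fmap_def x x')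
  have hB: "b ^ d * y n = c * (b' ^ d * y' n)"
    using F[rule_format, of "n+1"] by (auto simp: Fmap_def x x')
  have hC: "of_nat d * a * b ^ (d - 1) * y 0 = c * (of_nat d * a' * b' ^ (d - 1) * y' 0)"
    using F[rule_format, of "n+2"] by (auto simp: Fmap_def x x')
  have hD: "\<And>j. j < n \<Longrightarrow> b ^ d * y j + of_nat d * a * b ^ (d - 1) * y (j + 1)
      = c * (b' ^ d * y' j + of_nat d * a' * b' ^ (d - 1) * y' (j + 1))"
  proof -
    fix j assume "j < n"
    then show "?thesis j" using F[rule_format, of "n+3+j"] by (auto simp: Fmap_def x x')
  qed
  obtain j where j: "j \<le> n" "y j \<noteq> 0" using ny(1) unfolding nzn_def by auto
  obtain j' where j': "j' \<le> n" "y' j' \<noteq> 0" using ny(2) unfolding nzn_def by auto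
  have d0: "d \<noteq> 0" using d1 by simp
  show ?thesis
  proof (cases "a = 0")
    case True
    have a'0: "a' = 0"
    proof (rule ccontr)
      assume "a' \<noteq> 0"
      then show False using hA[OF j'(1)] True c0 j' d0 by (simp add: power_0_left)
    qed
    have b: "b \<noteq> 0" using nx(1) True x by (simp add: nz1_def)
    have b': "b' \<noteq> 0" using nx(2) a'0 x' by (simp add: nz1_def)
    have yy: "\<And>k. k \<le> n \<Longrightarrow> b ^ d * y k = c * (b' ^ d * y' k)"
    proof -
      fix k assume k: "k \<le> n"
      show "?thesis k"
      proof (cases "k = n")
        case True then show ?thesis using hB by simp
      next
        case False then show ?thesis using hD[of k] k True a'0 by simp
      qed
    qed
    have "same_ptn n y y'" unfolding same_ptn_def
    proof (intro exI[of _ "c * b' ^ d / b ^ d"] conjI allI impI)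
      show "c * b' ^ d / b ^ d \<noteq> 0" using c0 b b' by simp
      fix k assume "k \<le> n"
      then show "y k = c * b' ^ d / b ^ d * y' k" using yy[of k] b by (simp add: field_simps)
    qed
    moreover have "same_pt1 x x'" unfolding same_pt1_def x x'
      using True a'0 b b' by (intro exI[of _ "b / b'"]) simp
    ultimately show ?thesis by simp
  next
    case False
    have a'0: "a' \<noteq> 0"
    proof
      assume "a' = 0"
      then show False using hA[OF j(1)] False c0 j d0 by (simp add: power_0_left)
    qed
    define r where "r = a ^ d / a' ^ d"
    have cy: "\<And>k. k \<le> n \<Longrightarrow> c * y' k = r * y k"
      using hA a'0 unfolding r_def by (simp add: field_simps)
    define t where "t = b / a"
    define t' where "t' = b' / a'"
    have bt: "b = t * a" using False unfolding t_def by simp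
    have bt': "b' = t' * a'" using a'0 unfolding t'_def by simp
    have ad: "\<And>u::complex. u * u ^ (d - 1) = u ^ d" using d1
      by (metis Suc_diff_1 less_le_trans zero_less_one power_Suc)
    have ad0: "a ^ d \<noteq> 0" using False by simp
    have ad0': "a' ^ d \<noteq> 0" using a'0 by simp
    have ra: "r * a' ^ d = a ^ d" unfolding r_def using ad0' by simp
    have eB: "t ^ d * y n = t' ^ d * y n"
    proof -
      have "b ^ d * y n = r * b' ^ d * y n" using hB cy[of n] by (simp add: algebra_simps)
      moreover have "b ^ d = t ^ d * a ^ d" unfolding bt by (simp add: power_mult_distrib)
      moreover have "r * b' ^ d = t' ^ d * a ^ d" unfolding bt' r_def using ad0'
        by (simp add: power_mult_distrib)
      ultimately have "t ^ d * a ^ d * y n = t' ^ d * a ^ d * y n" by simp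
      then have "a ^ d * (t ^ d * y n) = a ^ d * (t' ^ d * y n)" by (metis mult.assoc mult.commute)
      then show ?thesis using ad0 by (metis mult_left_cancel)
    qed
    have eC: "t ^ (d - 1) * y 0 = t' ^ (d - 1) * y 0"
    proof -
      have "of_nat d * (a * b ^ (d - 1)) * y 0 = of_nat d * a * b ^ (d - 1) * y 0" by (simp add: ac_simps)
      also have "\<dots> = c * (of_nat d * a' * b' ^ (d - 1) * y' 0)" by (rule hC)
      also have "\<dots> = of_nat d * a' * b' ^ (d - 1) * (c * y' 0)" by (simp add: ac_simps)
      also have "\<dots> = r * (of_nat d * (a' * b' ^ (d - 1))) * y 0" using cy[of 0] by (simp add: ac_simps)
      finally have "of_nat d * (a * b ^ (d - 1)) * y 0 = r * (of_nat d * (a' * b' ^ (d - 1))) * y 0" .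
      also have "a * b ^ (d - 1) = t ^ (d - 1) * a ^ d" unfolding bt
        by (simp add: power_mult_distrib ad[of a, symmetric] algebra_simps)
      also have "a' * b' ^ (d - 1) = t' ^ (d - 1) * a' ^ d" unfolding bt'
        by (simp add: power_mult_distrib ad[of a', symmetric] algebra_simps)
      finally have E: "of_nat d * (t ^ (d - 1) * a ^ d) * y 0 = r * (of_nat d * (t' ^ (d - 1) * a' ^ d)) * y 0" .
      have "(of_nat d * a ^ d) * (t ^ (d - 1) * y 0) = of_nat d * (t ^ (d - 1) * a ^ d) * y 0"
        by (simp add: ac_simps)
      also note E
      also have "r * (of_nat d * (t' ^ (d - 1) * a' ^ d)) * y 0 = of_nat d * (r * a' ^ d) * (t' ^ (d - 1) * y 0)"
        by (simp add: ac_simps)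
      also have "\<dots> = (of_nat d * a ^ d) * (t' ^ (d - 1) * y 0)" by (simp add: ra)
      finally have "(of_nat d * a ^ d) * (t ^ (d - 1) * y 0) = (of_nat d * a ^ d) * (t' ^ (d - 1) * y 0)" .
      moreover have "of_nat d * a ^ d \<noteq> (0::complex)" using ad0 d0 by simp
      ultimately show ?thesis by (metis mult_left_cancel)
    qed
    have eD: "t ^ d * y j + of_nat d * t ^ (d - 1) * y (j + 1)
        = t' ^ d * y j + of_nat d * t' ^ (d - 1) * y (j + 1)" if "j < n" for j
    proof -
      have c1: "c * y' j = r * y j" and c2: "c * y' (j + 1) = r * y (j + 1)"
        using cy[of j] cy[of "j+1"] that by auto
      have "b ^ d * y j + of_nat d * (a * b ^ (d - 1)) * y (j + 1)
          = c * (b' ^ d * y' j + of_nat d * a' * b' ^ (d - 1) * y' (j + 1))"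
        using hD[OF that] by (simp add: ac_simps)
      also have "\<dots> = b' ^ d * (c * y' j) + of_nat d * a' * b' ^ (d - 1) * (c * y' (j + 1))"
        by (simp add: algebra_simps)
      also have "\<dots> = r * (b' ^ d * y j + of_nat d * (a' * b' ^ (d - 1)) * y (j + 1))"
        unfolding c1 c2 by (simp add: algebra_simps)
      also have "a * b ^ (d - 1) = t ^ (d - 1) * a ^ d" unfolding bt
        by (simp add: power_mult_distrib ad[of a, symmetric] algebra_simps)
      also have "a' * b' ^ (d - 1) = t' ^ (d - 1) * a' ^ d" unfolding bt'
        by (simp add: power_mult_distrib ad[of a', symmetric] algebra_simps)
      also have "b ^ d = t ^ d * a ^ d" unfolding bt by (simp add: power_mult_distrib)
      also have "b' ^ d = t' ^ d * a' ^ d" unfolding bt' by (simp add: power_mult_distrib)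
      finally have E: "t ^ d * a ^ d * y j + of_nat d * (t ^ (d - 1) * a ^ d) * y (j + 1)
          = r * (t' ^ d * a' ^ d * y j + of_nat d * (t' ^ (d - 1) * a' ^ d) * y (j + 1))" .
      have "a ^ d * (t ^ d * y j + of_nat d * t ^ (d - 1) * y (j + 1))
          = t ^ d * a ^ d * y j + of_nat d * (t ^ (d - 1) * a ^ d) * y (j + 1)"
        by (simp add: algebra_simps)
      also note E
      also have "r * (t' ^ d * a' ^ d * y j + of_nat d * (t' ^ (d - 1) * a' ^ d) * y (j + 1))
          = (r * a' ^ d) * (t' ^ d * y j + of_nat d * t' ^ (d - 1) * y (j + 1))"
        by (simp add: algebra_simps)
      also have "\<dots> = a ^ d * (t' ^ d * y j + of_nat d * t' ^ (d - 1) * y (j + 1))" by (simp add: ra)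
      finally have "a ^ d * (t ^ d * y j + of_nat d * t ^ (d - 1) * y (j + 1))
          = a ^ d * (t' ^ d * y j + of_nat d * t' ^ (d - 1) * y (j + 1))" .
      then show ?thesis using ad0 by (metis mult_left_cancel)
    qed
    define m where "m = Max {k. k \<le> n \<and> y k \<noteq> 0}"
    have fin: "finite {k. k \<le> n \<and> y k \<noteq> 0}" by simp
    have mem: "j \<in> {k. k \<le> n \<and> y k \<noteq> 0}" using j by simp
    have "m \<in> {k. k \<le> n \<and> y k \<noteq> 0}"
      unfolding m_def using Max_in[OF fin] mem by blast
    then have m: "m \<le> n" "y m \<noteq> 0" by auto
    have mx: "y k = 0" if "k \<le> n" "m < k" for k
    proof (rule ccontr)
      assume "y k \<noteq> 0"
      then have "k \<le> m" unfolding m_def using that(1) by (intro Max_ge[OF fin]) simp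
      then show False using that(2) by simp
    qed
    have P: "t ^ d = t' ^ d"
    proof (cases "m = n")
      case True then show ?thesis using eB m by simp
    next
      case False
      then have "m < n" using m by simp
      then have "y (m + 1) = 0" using mx by simp
      then show ?thesis using eD[OF \<open>m < n\<close>] m by simp
    qed
    have Q: "t ^ (d - 1) = t' ^ (d - 1)"
    proof (cases "m = 0")
      case True then show ?thesis using eC m by simp
    next
      case False
      then have "m - 1 < n" "m - 1 + 1 = m" using m by auto
      then show ?thesis using eD[of "m - 1"] P m d0 by simp
    qed
    have tt: "t = t'" using tt_eq[OF P Q d1] .
    have "same_pt1 x x'" unfolding same_pt1_def x x'
      using False a'0 bt bt' tt by (intro exI[of _ "a / a'"]) (simp add: field_simps)
    moreover have "same_ptn n y y'" unfolding same_ptn_def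
    proof (intro exI[of _ "c / r"] conjI allI impI)
      show "c / r \<noteq> 0" using c0 ad0 ad0' unfolding r_def by simp
      fix k assume "k \<le> n"
      then show "y k = c / r * y' k" using cy[of k] ad0 ad0' unfolding r_def by (simp add: field_simps)
    qed
    ultimately show ?thesis by simp
  qed
qed

theorem theorem4p6:
  fixes n d :: nat
  assumes "n \<ge> 1" and "d \<ge> 1"
  shows "(\<forall>x y. nz1 x \<and> nzn n y \<longrightarrow> (\<exists>k\<le>2 * n + 2. Fmap d n x y k \<noteq> 0))
     \<and> (\<forall>x y x' y'. nz1 x \<and> nzn n y \<and> nz1 x' \<and> nzn n y' \<longrightarrow>
          (\<exists>c. c \<noteq> 0 \<and> (\<forall>k\<le>2 * n + 2. Fmap d n x y k = c * Fmap d n x' y' k)) \<longrightarrow>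
          same_pt1 x x' \<and> same_ptn n y y')
     \<and> injdim_P1Pn d n \<le> enat (2 * (n + 1))"
proof (intro conjI)
  show "\<forall>x y. nz1 x \<and> nzn n y \<longrightarrow> (\<exists>k\<le>2 * n + 2. Fmap d n x y k \<noteq> 0)"
    using nonvan assms(2) by blast
  show "\<forall>x y x' y'. nz1 x \<and> nzn n y \<and> nz1 x' \<and> nzn n y' \<longrightarrow>
          (\<exists>c. c \<noteq> 0 \<and> (\<forall>k\<le>2 * n + 2. Fmap d n x y k = c * Fmap d n x' y' k)) \<longrightarrow>
          same_pt1 x x' \<and> same_ptn n y y'"
    using injpart[OF assms] by blast
next
  define G where "G = gen d n ` {..2 * n + 2}"
  define V where "V = cs.span G"
  have GH: "G \<subseteq> H0 d n" unfolding G_def using gen_H0 by blast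
  have VH: "V \<subseteq> H0 d n" unfolding V_def using cs.span_minimal[OF GH H0_sub] .
  have sub: "cs.subspace V" unfolding V_def by simp
  have GV: "G \<subseteq> V" unfolding V_def by (rule cs.span_superset)
  have g0: "gen d n 0 \<in> V" using GV unfolding G_def by auto
  have "gen d n 0 (0, 0) = 1" by (simp add: gen_def dl_def)
  then have "V \<noteq> {\<lambda>_. 0}" using g0 by auto
  have ev: "ev_sec d n (gen d n k) x y = Fmap d n x y k" if "k \<le> 2 * n + 2" for k x y
    using gen_ev[OF assms(2) that] .
  have inj: "inj_morphism d n V"
    unfolding inj_morphism_def
  proof (rule conjI; intro allI impI)
    fix x y assume "nz1 x \<and> nzn n y"
    then obtain k where k: "k \<le> 2 * n + 2" "Fmap d n x y k \<noteq> 0" using nonvan assms(2) by blast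
    show "\<exists>s\<in>V. ev_sec d n s x y \<noteq> 0"
      using k GV ev[OF k(1)] unfolding G_def by (intro bexI[of _ "gen d n k"]) auto
  next
    fix x y x' y'
    assume h: "nz1 x \<and> nzn n y \<and> nz1 x' \<and> nzn n y'"
      and "\<exists>c. c \<noteq> 0 \<and> (\<forall>s\<in>V. ev_sec d n s x y = c * ev_sec d n s x' y')"
    then obtain c where c: "c \<noteq> 0" "\<forall>s\<in>V. ev_sec d n s x y = c * ev_sec d n s x' y'" by blast
    have "\<forall>k\<le>2 * n + 2. Fmap d n x y k = c * Fmap d n x' y' k"
    proof (intro allI impI)
      fix k assume k: "k \<le> 2 * n + 2"
      then have "gen d n k \<in> V" using GV unfolding G_def by auto
      then show "Fmap d n x y k = c * Fmap d n x' y' k" using c(2) ev[OF k] by metis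
    qed
    then show "same_pt1 x x' \<and> same_ptn n y y'" using injpart assms h c(1) by blast
  qed
  have "cs.dim V \<le> card G" unfolding V_def
    by (rule cs.dim_le_card) (auto simp: G_def)
  also have "card G \<le> card {..2 * n + 2}" unfolding G_def by (rule card_image_le) simp
  finally have dimV: "cs.dim V \<le> 2 * n + 3" by simp
  have mem: "V \<in> {V. V \<subseteq> H0 d n \<and> module.subspace cscale V \<and> V \<noteq> {\<lambda>_. 0} \<and> inj_morphism d n V}"
    using VH sub \<open>V \<noteq> {\<lambda>_. 0}\<close> inj by simp
  have "injdim_P1Pn d n \<le> enat (vector_space.dim cscale V - 1)"
    unfolding injdim_P1Pn_def by (rule INF_lower[OF mem])
  also have "\<dots> \<le> enat (2 * (n + 1))" using dimV by simp
  finally show "injdim_P1Pn d n \<le> enat (2 * (n + 1))" .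
qed

end
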